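(* For all finite multisets $\Phi,\Gamma$ and every formula $\chi$: if $\Phi,\Box\Gamma\Rightarrow\chi$ has a proof of height $h$ in $\mathsf{G4iSLt}$, then $\Phi,\Gamma\Rightarrow\chi$ has a proof in $\mathsf{G4iSLt}$ of height at most $h$.
   Context: Formulas are built by the grammar $\varphi ::= p \mid \bot \mid \varphi\land\varphi \mid \varphi\lor\varphi \mid \varphi\to\varphi \mid \Box\varphi$, with $p$ ranging over a countably infinite set of propositional variables. For a multiset $\Gamma$, $\Box\Gamma=\{\Box\psi:\psi\in\Gamma\}$; a boxed formula is one of the form $\Box\psi$. A sequent is $\Gamma\Rightarrow\chi$ with $\Gamma$ a finite multiset of formulas and $\chi$ a formula. The sequent calculus $\mathsf{G4iSLt}$ has the following rules, where $p$ is a propositional variable and $\Phi$ always denotes a multiset containing no boxed formula: (⊥L) $\bot,\Gamma\Rightarrow\chi$ (no premise); (IdP) $\Gamma,p\Rightarrow p$ (no premise); (∧L) from $\Gamma,\varphi,\psi\Rightarrow\chi$ infer $\Gamma,\varphi\land\psi\Rightarrow\chi$; (∧R) from $\Gamma\Rightarrow\varphi$ and $\Gamma\Rightarrow\psi$ infer $\Gamma\Rightarrow\varphi\land\psi$; (∨L) from $\Gamma,\varphi\Rightarrow\chi$ and $\Gamma,\psi\Rightarrow\chi$ infer $\Gamma,\varphi\lor\psi\Rightarrow\chi$; (∨R$_i$), $i\in\{1,2\}$: from $\Gamma\Rightarrow\varphi_i$ infer $\Gamma\Rightarrow\varphi_1\lor\varphi_2$; (p→L) from $\Gamma,p,\varphi\Rightarrow\chi$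 infer $\Gamma,p,p\to\varphi\Rightarrow\chi$; (→R) from $\Gamma,\varphi\Rightarrow\psi$ infer $\Gamma\Rightarrow\varphi\to\psi$; (□→L) from $\Phi,\Gamma,\psi,\Box\varphi\Rightarrow\varphi$ and $\Phi,\Box\Gamma,\psi\Rightarrow\chi$ infer $\Phi,\Box\Gamma,\Box\varphi\to\psi\Rightarrow\chi$; (SLtR) from $\Phi,\Gamma,\Box\varphi\Rightarrow\varphi$ infer $\Phi,\Box\Gamma\Rightarrow\Box\varphi$; (∧→L) from $\Gamma,\varphi\to(\psi\to\chi)\Rightarrow\delta$ infer $\Gamma,(\varphi\land\psi)\to\chi\Rightarrow\delta$; (∨→L) from $\Gamma,\varphi\to\chi,\psi\to\chi\Rightarrow\delta$ infer $\Gamma,(\varphi\lor\psi)\to\chi\Rightarrow\delta$; (→→L) from $\Gamma,\psi\to\chi\Rightarrow\varphi\to\psi$ and $\Gamma,\chi\Rightarrow\delta$ infer $\Gamma,(\varphi\to\psi)\to\chi\Rightarrow\delta$. (In the rules above $\Phi$ is box-free; in the claim, $\Phi$ is an arbitrary finite multiset.) A proof of a sequent $S$ is a finite tree of sequents with root $S$ in which each interior node together with its children forms an instance of a rule (conclusion, premises) and each leaf is the conclusion of a premise-free rule; $S$ is provable if it has a proof. The height of a proof is the maximum number of nodes on a path from the root to a leaf. *)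

theory Defs
  imports Main "HOL-Library.Multiset"
begin

datatype form =
    Var nat
  | Bot
  | And form form
  | Or form form
  | Imp form form
  | Box form

type_synonym sequent = "form multiset \<times> form"

fun is_box :: "form \<Rightarrow> bool" where
  "is_box (Box _) = True"
| "is_box _ = False"

definition box_free :: "form multiset \<Rightarrow> bool" where
  "box_free \<Phi> \<longleftrightarrow> (\<forall>\<phi> \<in># \<Phi>. \<not> is_box \<phi>)"

abbreviation boxms :: "form multiset \<Rightarrow> form multiset" where
  "boxms \<Gamma> \<equiv> image_mset Box \<Gamma>"

inductive g4islt_rule :: "sequent list \<Rightarrow> sequent \<Rightarrow> bool" where
  BotL: "g4islt_rule [] (add_mset Bot \<Gamma>, \<chi>)"
| IdP: "g4islt_rule [] (add_mset (Var p) \<Gamma>, Var p)"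
| AndL: "g4islt_rule [(add_mset \<phi> (add_mset \<psi> \<Gamma>), \<chi>)] (add_mset (And \<phi> \<psi>) \<Gamma>, \<chi>)"
| AndR: "g4islt_rule [(\<Gamma>, \<phi>), (\<Gamma>, \<psi>)] (\<Gamma>, And \<phi> \<psi>)"
| OrL: "g4islt_rule [(add_mset \<phi> \<Gamma>, \<chi>), (add_mset \<psi> \<Gamma>, \<chi>)] (add_mset (Or \<phi> \<psi>) \<Gamma>, \<chi>)"
| OrR1: "g4islt_rule [(\<Gamma>, \<phi>)] (\<Gamma>, Or \<phi> \<psi>)"
| OrR2: "g4islt_rule [(\<Gamma>, \<psi>)] (\<Gamma>, Or \<phi> \<psi>)"
| PImpL: "g4islt_rule [(add_mset (Var p) (add_mset \<phi> \<Gamma>), \<chi>)]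
                      (add_mset (Var p) (add_mset (Imp (Var p) \<phi>) \<Gamma>), \<chi>)"
| ImpR: "g4islt_rule [(add_mset \<phi> \<Gamma>, \<psi>)] (\<Gamma>, Imp \<phi> \<psi>)"
| BoxImpL: "box_free \<Phi> \<Longrightarrow>
    g4islt_rule [(\<Phi> + \<Gamma> + {#\<psi>, Box \<phi>#}, \<phi>), (\<Phi> + boxms \<Gamma> + {#\<psi>#}, \<chi>)]
                (\<Phi> + boxms \<Gamma> + {#Imp (Box \<phi>) \<psi>#}, \<chi>)"
| SLtR: "box_free \<Phi> \<Longrightarrow>
    g4islt_rule [(\<Phi> + \<Gamma> + {#Box \<phi>#}, \<phi>)] (\<Phi> + boxms \<Gamma>, Box \<phi>)"
| AndImpL: "g4islt_rule [(add_mset (Imp \<phi> (Imp \<psi> \<chi>)) \<Gamma>, \<delta>)]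
                        (add_mset (Imp (And \<phi> \<psi>) \<chi>) \<Gamma>, \<delta>)"
| OrImpL: "g4islt_rule [(add_mset (Imp \<phi> \<chi>) (add_mset (Imp \<psi> \<chi>) \<Gamma>), \<delta>)]
                       (add_mset (Imp (Or \<phi> \<psi>) \<chi>) \<Gamma>, \<delta>)"
| ImpImpL: "g4islt_rule [(add_mset (Imp \<psi> \<chi>) \<Gamma>, Imp \<phi> \<psi>), (add_mset \<chi> \<Gamma>, \<delta>)]
                        (add_mset (Imp (Imp \<phi> \<psi>) \<chi>) \<Gamma>, \<delta>)"

text \<open>provable_h S h: S has a proof (finite tree) of height exactly h,
  where height = max number of nodes on a root-to-leaf path (a leaf has height 1).\<close>
inductive provable_h :: "sequent \<Rightarrow> nat \<Rightarrow> bool" where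
  step: "g4islt_rule ps S \<Longrightarrow> list_all2 provable_h ps hs \<Longrightarrow>
         h = Suc (foldr max hs 0) \<Longrightarrow> provable_h S h"

end

theory Submission
  imports Defs
begin

lemma finish:
  assumes "list_all2 provable_h ps hs"
    and "list_all2 (\<lambda>p p'. \<forall>hh. provable_h p hh \<longrightarrow> hh \<le> m \<longrightarrow> (\<exists>h'\<le>hh. provable_h p' h')) ps ps'"
    and "foldr max hs 0 \<le> m"
  shows "\<exists>hs'. list_all2 provable_h ps' hs' \<and> foldr max hs' 0 \<le> foldr max hs 0"
  using assms
proof (induction arbitrary: ps' rule: list_all2_induct)
  case Nil
  then show ?case by auto
next
  case (Cons x xs y ys)
  from Cons.prems obtain p' ps'' where P: "ps' = p' # ps''"
    and A: "\<forall>hh. provable_h x hh \<longrightarrow> hh \<le> m \<longrightarrow> (\<exists>h'\<le>hh. provable_h p' h')"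
    and B: "list_all2 (\<lambda>p p'. \<forall>hh. provable_h p hh \<longrightarrow> hh \<le> m \<longrightarrow> (\<exists>h'\<le>hh. provable_h p' h')) xs ps''"
    by (auto simp: list_all2_Cons1)
  from Cons.prems have "y \<le> m" "foldr max ys 0 \<le> m" by auto
  with A Cons.hyps obtain h' where "h' \<le> y" "provable_h p' h'" by blast
  moreover from Cons.IH[OF B] \<open>foldr max ys 0 \<le> m\<close> obtain hs' where
    "list_all2 provable_h ps'' hs'" "foldr max hs' 0 \<le> foldr max ys 0" by blast
  ultimately show ?case using P
    by (intro exI[of _ "h' # hs'"]) auto
qed

lemma finish2:
  assumes "g4islt_rule ps' S'" "list_all2 provable_h ps hs"
    "list_all2 (\<lambda>p p'. \<forall>hh. provable_h p hh \<longrightarrow> hh \<le> foldr max hs 0 \<longrightarrow> (\<exists>h'\<le>hh. provable_h p' h')) ps ps'"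
  shows "\<exists>h'\<le>Suc (foldr max hs 0). provable_h S' h'"
proof -
  obtain hs' where "list_all2 provable_h ps' hs'" "foldr max hs' 0 \<le> foldr max hs 0"
    using finish[OF assms(2) assms(3)] by auto
  then show ?thesis using provable_h.step[OF assms(1)] by auto
qed

lemma nonbox_split:
  assumes "add_mset A \<Delta> = \<Phi> + boxms \<Gamma>" "\<not> is_box A"
  shows "\<exists>\<Phi>0. \<Phi> = add_mset A \<Phi>0 \<and> \<Delta> = \<Phi>0 + boxms \<Gamma>"
proof -
  have "A \<in># \<Phi> + boxms \<Gamma>" using assms(1) by (metis union_single_eq_member)
  moreover have "A \<notin># boxms \<Gamma>" using assms(2) by auto
  ultimately have "A \<in># \<Phi>" by auto
  then obtain \<Phi>0 where "\<Phi> = add_mset A \<Phi>0" by (metis mset_add)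
  with assms(1) show ?thesis by auto
qed

lemma gamma_split: "\<exists>Gn Gb. (G::form multiset) = Gn + boxms Gb \<and> box_free Gn"
proof (induction G)
  case empty
  then show ?case by (auto simp: box_free_def)
next
  case (add x G)
  then obtain Gn Gb where "G = Gn + boxms Gb" "box_free Gn" by blast
  then show ?case
  proof (cases x)
    case (Box y)
    then show ?thesis using \<open>G = Gn + boxms Gb\<close> \<open>box_free Gn\<close>
      by (intro exI[of _ Gn] exI[of _ "add_mset y Gb"]) auto
  qed (use \<open>G = Gn + boxms Gb\<close> \<open>box_free Gn\<close> in
        \<open>(intro exI[of _ "add_mset x Gn"] exI[of _ Gb]; auto simp: box_free_def)+\<close>)
qed

fun unbox :: "form \<Rightarrow> form" where
  "unbox (Box x) = x" | "unbox x = x"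

lemma filter_boxms: "filter_mset is_box (boxms G) = boxms G"
  by (induction G) auto

lemma filter_bf: "box_free R \<Longrightarrow> filter_mset is_box R = {#}"
  by (auto simp: box_free_def filter_mset_eq_conv)

lemma unbox_boxms: "image_mset unbox (boxms G) = G"
  by (induction G) auto

lemma boxsplit:
  assumes "\<Phi> + boxms \<Gamma> = R + boxms Gr" "box_free R"
  shows "\<exists>G0. Gr = \<Gamma> + G0 \<and> \<Phi> = R + boxms G0"
proof -
  have "filter_mset is_box (\<Phi> + boxms \<Gamma>) = filter_mset is_box (R + boxms Gr)"
    using assms(1) by simp
  hence "filter_mset is_box \<Phi> + boxms \<Gamma> = boxms Gr"
    using filter_bf[OF assms(2)] by (simp add: filter_boxms)
  hence "boxms \<Gamma> \<subseteq># boxms Gr" by (metis mset_subset_eq_add_right)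
  hence "image_mset unbox (boxms \<Gamma>) \<subseteq># image_mset unbox (boxms Gr)"
    by (rule image_mset_subseteq_mono)
  hence "\<Gamma> \<subseteq># Gr" by (simp add: unbox_boxms)
  then obtain G0 where G0: "Gr = \<Gamma> + G0" by (metis subset_mset.le_iff_add)
  with assms(1) have "\<Phi> = R + boxms G0" by (simp add: ac_simps)
  with G0 show ?thesis by blast
qed

lemma main: "provable_h (\<Phi> + boxms \<Gamma>, \<chi>) h \<Longrightarrow> \<exists>h'\<le>h. provable_h (\<Phi> + \<Gamma>, \<chi>) h'"
proof (induction h arbitrary: \<Phi> \<Gamma> \<chi> rule: less_induct)
  case (less h \<Phi> \<Gamma> \<chi>)
  from less.prems obtain ps hs where R: "g4islt_rule ps (\<Phi> + boxms \<Gamma>, \<chi>)"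
    and L: "list_all2 provable_h ps hs" and H: "h = Suc (foldr max hs 0)"
    by (cases rule: provable_h.cases) auto
  have IH: "\<And>hh \<Phi>' \<Gamma>' \<chi>'. provable_h (\<Phi>' + boxms \<Gamma>', \<chi>') hh \<Longrightarrow> hh \<le> foldr max hs 0
     \<Longrightarrow> \<exists>h'\<le>hh. provable_h (\<Phi>' + \<Gamma>', \<chi>') h'"
    using less.IH H by auto
  from R show ?case
  proof (cases rule: g4islt_rule.cases)
    case (BotL D)
    obtain P0 where P0: "\<Phi> = add_mset Bot P0" "D = P0 + boxms \<Gamma>"
      using nonbox_split[OF BotL(2)[symmetric]] by auto
    have "\<exists>h'\<le>Suc (foldr max hs 0). provable_h (add_mset Bot (P0 + \<Gamma>), \<chi>) h'"
      by (rule finish2[OF g4islt_rule.BotL L]) (simp add: BotL)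
    then show ?thesis using H P0 by auto
  next
    case (IdP p D)
    obtain P0 where P0: "\<Phi> = add_mset (Var p) P0" "D = P0 + boxms \<Gamma>"
      using nonbox_split[OF IdP(2)[symmetric]] by auto
    have "\<exists>h'\<le>Suc (foldr max hs 0). provable_h (add_mset (Var p) (P0 + \<Gamma>), Var p) h'"
      by (rule finish2[OF g4islt_rule.IdP L]) (simp add: IdP)
    then show ?thesis using H P0 IdP by auto
  next
    case (AndL a b D)
    obtain P0 where P0: "\<Phi> = add_mset (And a b) P0" "D = P0 + boxms \<Gamma>"
      using nonbox_split[OF AndL(2)[symmetric]] by auto
    have "\<exists>h'\<le>Suc (foldr max hs 0). provable_h (add_mset (And a b) (P0 + \<Gamma>), \<chi>) h'"
      apply (rule finish2[OF g4islt_rule.AndL L])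
      using IH[of "add_mset a (add_mset b P0)" \<Gamma> \<chi>] by (simp add: AndL P0)
    then show ?thesis using H P0 by auto
  next
    case (AndR a b)
    have "\<exists>h'\<le>Suc (foldr max hs 0). provable_h (\<Phi> + \<Gamma>, And a b) h'"
      apply (rule finish2[OF g4islt_rule.AndR L])
      using IH[of \<Phi> \<Gamma> a] IH[of \<Phi> \<Gamma> b] by (simp add: AndR)
    then show ?thesis using H AndR by auto
  next
    case (OrL a D b)
    obtain P0 where P0: "\<Phi> = add_mset (Or a b) P0" "D = P0 + boxms \<Gamma>"
      using nonbox_split[OF OrL(2)[symmetric]] by auto
    have "\<exists>h'\<le>Suc (foldr max hs 0). provable_h (add_mset (Or a b) (P0 + \<Gamma>), \<chi>) h'"
      apply (rule finish2[OF g4islt_rule.OrL L])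
      using IH[of "add_mset a P0" \<Gamma> \<chi>] IH[of "add_mset b P0" \<Gamma> \<chi>] by (simp add: OrL P0)
    then show ?thesis using H P0 by auto
  next
    case (OrR1 a b)
    have "\<exists>h'\<le>Suc (foldr max hs 0). provable_h (\<Phi> + \<Gamma>, Or a b) h'"
      apply (rule finish2[OF g4islt_rule.OrR1 L])
      using IH[of \<Phi> \<Gamma> a] by (simp add: OrR1)
    then show ?thesis using H OrR1 by auto
  next
    case (OrR2 b a)
    have "\<exists>h'\<le>Suc (foldr max hs 0). provable_h (\<Phi> + \<Gamma>, Or a b) h'"
      apply (rule finish2[OF g4islt_rule.OrR2 L])
      using IH[of \<Phi> \<Gamma> b] by (simp add: OrR2)
    then show ?thesis using H OrR2 by auto
  next
    case (PImpL p a D)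
    obtain P1 where P1: "\<Phi> = add_mset (Var p) P1" "add_mset (Imp (Var p) a) D = P1 + boxms \<Gamma>"
      using nonbox_split[OF PImpL(2)[symmetric]] by auto
    obtain P0 where P0: "P1 = add_mset (Imp (Var p) a) P0" "D = P0 + boxms \<Gamma>"
      using nonbox_split[OF P1(2)] by auto
    have "\<exists>h'\<le>Suc (foldr max hs 0). provable_h (add_mset (Var p) (add_mset (Imp (Var p) a) (P0 + \<Gamma>)), \<chi>) h'"
      apply (rule finish2[OF g4islt_rule.PImpL L])
      using IH[of "add_mset (Var p) (add_mset a P0)" \<Gamma> \<chi>] by (simp add: PImpL P0)
    then show ?thesis using H P0 P1 by auto
  next
    case (ImpR a b)
    have "\<exists>h'\<le>Suc (foldr max hs 0). provable_h (\<Phi> + \<Gamma>, Imp a b) h'"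
      apply (rule finish2[OF g4islt_rule.ImpR L])
      using IH[of "add_mset a \<Phi>" \<Gamma> b] by (simp add: ImpR)
    then show ?thesis using H ImpR by auto
  next
    case (BoxImpL Pr Gr b a)
    have eq: "\<Phi> + boxms \<Gamma> = (Pr + {#Imp (Box a) b#}) + boxms Gr" using BoxImpL(2) by (simp add: ac_simps)
    have bf: "box_free (Pr + {#Imp (Box a) b#})" using BoxImpL(3) by (simp add: box_free_def)
    obtain G0 where G0: "Gr = \<Gamma> + G0" "\<Phi> = Pr + {#Imp (Box a) b#} + boxms G0"
      using boxsplit[OF eq bf] by auto
    obtain Gn Gb where GG: "\<Gamma> = Gn + boxms Gb" "box_free Gn" using gamma_split by blast
    have bf2: "box_free (Pr + Gn)" using BoxImpL(3) GG(2) by (auto simp: box_free_def)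
    have c1: "\<forall>hh. provable_h (Pr + Gr + {#b, Box a#}, a) hh \<longrightarrow> hh \<le> foldr max hs 0 \<longrightarrow>
       (\<exists>h'\<le>hh. provable_h (Pr + Gn + (G0 + Gb) + {#b, Box a#}, a) h')"
    proof (intro allI impI)
      fix hh assume a1: "provable_h (Pr + Gr + {#b, Box a#}, a) hh" "hh \<le> foldr max hs 0"
      have "Pr + Gr + {#b, Box a#} = (Pr + Gn + G0 + {#b, Box a#}) + boxms Gb"
        using G0 GG by (simp add: ac_simps)
      with a1 IH[of "Pr + Gn + G0 + {#b, Box a#}" Gb a hh] show "\<exists>h'\<le>hh. provable_h (Pr + Gn + (G0 + Gb) + {#b, Box a#}, a) h'"
        by (simp add: ac_simps)
    qed
    have c2: "\<forall>hh. provable_h (Pr + boxms Gr + {#b#}, \<chi>) hh \<longrightarrow> hh \<le> foldr max hs 0 \<longrightarrow>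
       (\<exists>h'\<le>hh. provable_h (Pr + Gn + boxms (G0 + Gb) + {#b#}, \<chi>) h')"
    proof (intro allI impI)
      fix hh assume a1: "provable_h (Pr + boxms Gr + {#b#}, \<chi>) hh" "hh \<le> foldr max hs 0"
      have e1: "Pr + boxms Gr + {#b#} = (Pr + boxms G0 + {#b#}) + boxms \<Gamma>"
        using G0 by (simp add: ac_simps)
      have e2: "Pr + Gn + boxms (G0 + Gb) + {#b#} = (Pr + boxms G0 + {#b#}) + \<Gamma>"
        using GG by (simp add: ac_simps)
      have p: "provable_h ((Pr + boxms G0 + {#b#}) + boxms \<Gamma>, \<chi>) hh" using a1(1) unfolding e1 .
      obtain h' where "h' \<le> hh" "provable_h ((Pr + boxms G0 + {#b#}) + \<Gamma>, \<chi>) h'"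
        using IH[OF p a1(2)] by blast
      then show "\<exists>h'\<le>hh. provable_h (Pr + Gn + boxms (G0 + Gb) + {#b#}, \<chi>) h'"
        unfolding e2 by blast
    qed
    have "\<exists>h'\<le>Suc (foldr max hs 0). provable_h (Pr + Gn + boxms (G0 + Gb) + {#Imp (Box a) b#}, \<chi>) h'"
      apply (rule finish2[OF g4islt_rule.BoxImpL[OF bf2] L])
      using c1 c2 by (simp add: BoxImpL)
    moreover have "Pr + Gn + boxms (G0 + Gb) + {#Imp (Box a) b#} = \<Phi> + \<Gamma>"
      using G0 GG by (simp add: ac_simps)
    ultimately show ?thesis using H by auto
  next
    case (SLtR Pr Gr a)
    obtain G0 where G0: "Gr = \<Gamma> + G0" "\<Phi> = Pr + boxms G0"
      using boxsplit[OF SLtR(2) SLtR(4)] by auto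
    obtain Gn Gb where GG: "\<Gamma> = Gn + boxms Gb" "box_free Gn" using gamma_split by blast
    have bf2: "box_free (Pr + Gn)" using SLtR(4) GG(2) by (auto simp: box_free_def)
    have c1: "\<forall>hh. provable_h (Pr + Gr + {#Box a#}, a) hh \<longrightarrow> hh \<le> foldr max hs 0 \<longrightarrow>
       (\<exists>h'\<le>hh. provable_h (Pr + Gn + (G0 + Gb) + {#Box a#}, a) h')"
    proof (intro allI impI)
      fix hh assume a1: "provable_h (Pr + Gr + {#Box a#}, a) hh" "hh \<le> foldr max hs 0"
      have "Pr + Gr + {#Box a#} = (Pr + Gn + G0 + {#Box a#}) + boxms Gb"
        using G0 GG by (simp add: ac_simps)
      with a1 IH[of "Pr + Gn + G0 + {#Box a#}" Gb a hh] show "\<exists>h'\<le>hh. provable_h (Pr + Gn + (G0 + Gb) + {#Box a#}, a) h'"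
        by (simp add: ac_simps)
    qed
    have "\<exists>h'\<le>Suc (foldr max hs 0). provable_h (Pr + Gn + boxms (G0 + Gb), Box a) h'"
      apply (rule finish2[OF g4islt_rule.SLtR[OF bf2] L])
      using c1 by (simp add: SLtR)
    moreover have "Pr + Gn + boxms (G0 + Gb) = \<Phi> + \<Gamma>"
      using G0 GG by (simp add: ac_simps)
    ultimately show ?thesis using H SLtR by auto
  next
    case (AndImpL a b c D)
    obtain P0 where P0: "\<Phi> = add_mset (Imp (And a b) c) P0" "D = P0 + boxms \<Gamma>"
      using nonbox_split[OF AndImpL(2)[symmetric]] by auto
    have "\<exists>h'\<le>Suc (foldr max hs 0). provable_h (add_mset (Imp (And a b) c) (P0 + \<Gamma>), \<chi>) h'"
      apply (rule finish2[OF g4islt_rule.AndImpL L])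
      using IH[of "add_mset (Imp a (Imp b c)) P0" \<Gamma> \<chi>] by (simp add: AndImpL P0)
    then show ?thesis using H P0 by auto
  next
    case (OrImpL a c b D)
    obtain P0 where P0: "\<Phi> = add_mset (Imp (Or a b) c) P0" "D = P0 + boxms \<Gamma>"
      using nonbox_split[OF OrImpL(2)[symmetric]] by auto
    have "\<exists>h'\<le>Suc (foldr max hs 0). provable_h (add_mset (Imp (Or a b) c) (P0 + \<Gamma>), \<chi>) h'"
      apply (rule finish2[OF g4islt_rule.OrImpL L])
      using IH[of "add_mset (Imp a c) (add_mset (Imp b c) P0)" \<Gamma> \<chi>] by (simp add: OrImpL P0)
    then show ?thesis using H P0 by auto
  next
    case (ImpImpL b c D a)
    obtain P0 where P0: "\<Phi> = add_mset (Imp (Imp a b) c) P0" "D = P0 + boxms \<Gamma>"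
      using nonbox_split[OF ImpImpL(2)[symmetric]] by auto
    have "\<exists>h'\<le>Suc (foldr max hs 0). provable_h (add_mset (Imp (Imp a b) c) (P0 + \<Gamma>), \<chi>) h'"
      apply (rule finish2[OF g4islt_rule.ImpImpL L])
      using IH[of "add_mset (Imp b c) P0" \<Gamma> "Imp a b"] IH[of "add_mset c P0" \<Gamma> \<chi>] by (simp add: ImpImpL P0)
    then show ?thesis using H P0 by auto
  qed
qed

theorem mainTheorem7:
  fixes \<Phi> \<Gamma> :: "form multiset" and \<chi> :: form and h :: nat
  assumes "provable_h (\<Phi> + boxms \<Gamma>, \<chi>) h"
  shows "\<exists>h'\<le>h. provable_h (\<Phi> + \<Gamma>, \<chi>) h'"
  using main[OF assms] .

end
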